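(* For all real $(B,A)$ with $A\neq0$ (and $l=B/\omega\ge0$, $\mu=A/(2\omega)>0$), the unimodular normalized monodromy matrix $\widetilde M=e^{\pi il}M$ has real trace; equivalently $\operatorname{tr}\widetilde M=2\cos(\pi l)+e^{\pi il}c_0c_1\in\mathbb R$, i.e. $e^{\pi il}c_0c_1\in\mathbb R$.
   Context: Fix $\omega>0$; $l=B/\omega$, $\mu=A/(2\omega)$. System (L): $u'=z^{-2}\big(-(lz+\mu(1+z^2))u+\frac{z}{2i\omega}v\big)$, $v'=\frac{1}{2i\omega z}u$. Its projectivization $\Phi=v/u$ is the complexification (via $\Phi=e^{i\phi}$, $z=e^{i\tau}$) of $\frac{d\phi}{d\tau}=-\frac{\sin\phi}{\omega}+l+2\mu\cos\tau$. $F(z)=\operatorname{diag}(z^{-l}e^{\mu(1/z-z)},1)$; $S_\pm$ are sectors with vertex $0$ containing the closed upper/lower half-plane minus $0$, closures avoiding $i\mathbb R_\mp$, $S_-=\overline{S_+}$; $H_\pm$ are the unique invertible matrix functions holomorphic on $S_\pm$, $C^\infty$ on $\overline{S_\pm}\setminus\{\infty\}$, $H_\pm(0)=\mathrm{Id}$, transforming (L) into $\tilde u'=-z^{-2}(lz+\mu(1+z^2))\tilde u$, $\tilde v'=0$; $W_\pm=H_\pm F$ (branch on $S_-$ by counterclockwise continuation from $S_+$), $W_{+,1}=H_+F$ with branch continued counterclockwise from $S_-$. With $\Sigma_0\ni\mathbb R_-$, $\Sigma_1\ni\mathbb R_+$ the components of $S_+\cap S_-$: $W_-=W_+C_0$ on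 $\Sigma_0$, $W_{+,1}=W_-C_1$ on $\Sigma_1$, $C_0=\begin{pmatrix}1&c_0\\0&1\end{pmatrix}$, $C_1=\begin{pmatrix}1&0\\c_1&1\end{pmatrix}$. $M_N=\operatorname{diag}(e^{-2\pi il},1)$. The monodromy matrix of (L) along a counterclockwise circuit around $0$, in the basis $W_+$, is $M=M_NC_1^{-1}C_0^{-1}$, and $\widetilde M=e^{\pi il}M$. *)

theory Defs
  imports "HOL-Analysis.Analysis"
begin

definition Lmat :: "real \<Rightarrow> real \<Rightarrow> real \<Rightarrow> complex \<Rightarrow> complex^2^2" where
  "Lmat \<omega> l \<mu> z =
     vector [vector [ - (of_real l * z + of_real \<mu> * (1 + z^2)) / z^2,
                      1 / (2 * \<i> * of_real \<omega> * z)],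
             vector [ 1 / (2 * \<i> * of_real \<omega> * z), 0]]"

text \<open>Y is a fundamental matrix solution of (L) lifted to the universal cover of
  C - {0} via z = exp zeta (columns are solutions; dY/dzeta = exp zeta * L(exp zeta) Y).\<close>
definition fundamental_solution_L :: "real \<Rightarrow> real \<Rightarrow> real \<Rightarrow> (complex \<Rightarrow> complex^2^2) \<Rightarrow> bool" where
  "fundamental_solution_L \<omega> l \<mu> Y \<longleftrightarrow>
     (\<forall>\<zeta> i j. ((\<lambda>t. Y t $ i $ j) has_field_derivative
                   (exp \<zeta> * ((Lmat \<omega> l \<mu> (exp \<zeta>) ** Y \<zeta>) $ i $ j))) (at \<zeta>))
     \<and> (\<forall>\<zeta>. det (Y \<zeta>) \<noteq> 0)"

text \<open>M is the monodromy matrix of (L) along a counterclockwise circuit around 0 in the basis Y: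
  continuing Y once counterclockwise (zeta \<mapsto> zeta + 2 pi i) gives Y M.\<close>
definition is_monodromy_L :: "real \<Rightarrow> real \<Rightarrow> real \<Rightarrow> (complex \<Rightarrow> complex^2^2) \<Rightarrow> complex^2^2 \<Rightarrow> bool" where
  "is_monodromy_L \<omega> l \<mu> Y M \<longleftrightarrow>
     fundamental_solution_L \<omega> l \<mu> Y \<and> (\<forall>\<zeta>. Y (\<zeta> + 2 * of_real pi * \<i>) = Y \<zeta> ** M)"

definition normalized_monodromy :: "real \<Rightarrow> complex^2^2 \<Rightarrow> complex^2^2" where
  "normalized_monodromy l M = mat (exp (of_real pi * \<i> * of_real l)) ** M"

end

theory Submission
  imports Defs
begin

definition aa :: "real \<Rightarrow> real \<Rightarrow> complex \<Rightarrow> complex" where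
 "aa l \<mu> \<zeta> = -(of_real l + of_real \<mu> * (exp \<zeta> + exp (-\<zeta>)))"
definition bb :: "real \<Rightarrow> complex" where "bb \<omega> = 1 / (2 * \<i> * of_real \<omega>)"
definition GG :: "real \<Rightarrow> real \<Rightarrow> complex \<Rightarrow> complex" where
 "GG l \<mu> \<zeta> = -(of_real l * \<zeta> + of_real \<mu> * (exp \<zeta> - exp (-\<zeta>)))"

definition sol :: "real \<Rightarrow> real \<Rightarrow> real \<Rightarrow> (complex \<Rightarrow> complex) \<Rightarrow> (complex \<Rightarrow> complex) \<Rightarrow> bool" where
 "sol l \<mu> \<omega> f1 f2 \<longleftrightarrow> (\<forall>\<zeta>. (f1 has_field_derivative (aa l \<mu> \<zeta> * f1 \<zeta> + bb \<omega> * f2 \<zeta>)) (at \<zeta>)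
     \<and> (f2 has_field_derivative (bb \<omega> * f1 \<zeta>)) (at \<zeta>))"

lemma GG_deriv: "(GG l \<mu> has_field_derivative aa l \<mu> \<zeta>) (at \<zeta>)"
  unfolding GG_def[abs_def] aa_def
  by (auto intro!: derivative_eq_intros simp: algebra_simps)

lemma scalar_exp:
  assumes "\<And>\<zeta>. (f has_field_derivative aa l \<mu> \<zeta> * f \<zeta>) (at \<zeta>)"
  shows "\<exists>K. \<forall>\<zeta>. f \<zeta> = K * exp (GG l \<mu> \<zeta>)"
proof -
  have "\<exists>c. \<forall>x\<in>UNIV. f x * exp (- GG l \<mu> x) = c"
  proof (rule has_field_derivative_zero_constant)
    fix x :: complex
    have "((\<lambda>x. f x * exp (- GG l \<mu> x)) has_field_derivative 0) (at x)"
      by (auto intro!: derivative_eq_intros assms GG_deriv simp: algebra_simps)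
    then show "((\<lambda>x. f x * exp (- GG l \<mu> x)) has_field_derivative 0) (at x within UNIV)" by simp
  qed simp
  then obtain c where c: "\<And>x. f x * exp (- GG l \<mu> x) = c" by auto
  have "f \<zeta> = c * exp (GG l \<mu> \<zeta>)" for \<zeta>
    using c[of \<zeta>] by (auto simp: exp_minus field_simps)
  then show ?thesis by blast
qed

lemma wr:
  assumes "sol l \<mu> \<omega> f1 f2" "sol l \<mu> \<omega> g1 g2"
  shows "\<exists>K. \<forall>\<zeta>. f1 \<zeta> * g2 \<zeta> - f2 \<zeta> * g1 \<zeta> = K * exp (GG l \<mu> \<zeta>)"
proof (rule scalar_exp)
  fix \<zeta> :: complex
  from assms have d: "(f1 has_field_derivative (aa l \<mu> \<zeta> * f1 \<zeta> + bb \<omega> * f2 \<zeta>)) (at \<zeta>)"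
     "(f2 has_field_derivative (bb \<omega> * f1 \<zeta>)) (at \<zeta>)"
     "(g1 has_field_derivative (aa l \<mu> \<zeta> * g1 \<zeta> + bb \<omega> * g2 \<zeta>)) (at \<zeta>)"
     "(g2 has_field_derivative (bb \<omega> * g1 \<zeta>)) (at \<zeta>)" unfolding sol_def by auto
  show "((\<lambda>\<zeta>. f1 \<zeta> * g2 \<zeta> - f2 \<zeta> * g1 \<zeta>) has_field_derivative
      aa l \<mu> \<zeta> * (f1 \<zeta> * g2 \<zeta> - f2 \<zeta> * g1 \<zeta>)) (at \<zeta>)"
    by (auto intro!: derivative_eq_intros d simp: algebra_simps)
qed

lemma cnj_aa: "cnj (aa l \<mu> (cnj \<zeta>)) = aa l \<mu> \<zeta>"
  by (simp add: aa_def exp_cnj)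

lemma cnj_bb: "cnj (bb \<omega>) = - bb \<omega>"
  by (simp add: bb_def)

lemma conj_sol:
  assumes "sol l \<mu> \<omega> f1 f2"
  shows "sol l \<mu> \<omega> (\<lambda>\<zeta>. cnj (f1 (cnj \<zeta>))) (\<lambda>\<zeta>. - cnj (f2 (cnj \<zeta>)))"
  unfolding sol_def
proof
  fix \<zeta> :: complex
  from assms have d: "(f1 has_field_derivative (aa l \<mu> (cnj \<zeta>) * f1 (cnj \<zeta>) + bb \<omega> * f2 (cnj \<zeta>))) (at (cnj \<zeta>))"
     "(f2 has_field_derivative (bb \<omega> * f1 (cnj \<zeta>))) (at (cnj \<zeta>))" unfolding sol_def by auto
  have 1: "((\<lambda>\<zeta>. cnj (f1 (cnj \<zeta>))) has_field_derivative cnj (aa l \<mu> (cnj \<zeta>) * f1 (cnj \<zeta>) + bb \<omega> * f2 (cnj \<zeta>))) (at \<zeta>)"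
    using has_field_derivative_cnj_cnj[OF d(1)] by (simp add: o_def)
  have 2: "((\<lambda>\<zeta>. cnj (f2 (cnj \<zeta>))) has_field_derivative cnj (bb \<omega> * f1 (cnj \<zeta>))) (at \<zeta>)"
    using has_field_derivative_cnj_cnj[OF d(2)] by (simp add: o_def)
  show "((\<lambda>\<zeta>. cnj (f1 (cnj \<zeta>))) has_field_derivative
          aa l \<mu> \<zeta> * cnj (f1 (cnj \<zeta>)) + bb \<omega> * - cnj (f2 (cnj \<zeta>))) (at \<zeta>) \<and>
        ((\<lambda>\<zeta>. - cnj (f2 (cnj \<zeta>))) has_field_derivative bb \<omega> * cnj (f1 (cnj \<zeta>))) (at \<zeta>)"
  proof
    show "((\<lambda>\<zeta>. cnj (f1 (cnj \<zeta>))) has_field_derivative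
          aa l \<mu> \<zeta> * cnj (f1 (cnj \<zeta>)) + bb \<omega> * - cnj (f2 (cnj \<zeta>))) (at \<zeta>)"
      using 1 by (simp add: cnj_aa cnj_bb)
    show "((\<lambda>\<zeta>. - cnj (f2 (cnj \<zeta>))) has_field_derivative bb \<omega> * cnj (f1 (cnj \<zeta>))) (at \<zeta>)"
      using DERIV_minus[OF 2] by (simp add: cnj_bb)
  qed
qed

lemma mult2: "((A::complex^2^2) ** B) $ i $ j = A$i$1 * B$1$j + A$i$2 * B$2$j"
  by (simp add: matrix_matrix_mult_def sum_2)

lemma fund_sol:
  assumes "fundamental_solution_L \<omega> l \<mu> Y"
  shows "sol l \<mu> \<omega> (\<lambda>t. Y t $ 1 $ j) (\<lambda>t. Y t $ 2 $ j)"
  unfolding sol_def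
proof
  fix \<zeta> :: complex
  have e: "exp \<zeta> \<noteq> 0" by simp
  have 1: "exp \<zeta> * ((Lmat \<omega> l \<mu> (exp \<zeta>) ** Y \<zeta>) $ 1 $ j) = aa l \<mu> \<zeta> * Y \<zeta> $ 1 $ j + bb \<omega> * Y \<zeta> $ 2 $ j"
    unfolding mult2 Lmat_def aa_def bb_def using e
    by (simp add: exp_minus field_simps power2_eq_square)
  have 2: "exp \<zeta> * ((Lmat \<omega> l \<mu> (exp \<zeta>) ** Y \<zeta>) $ 2 $ j) = bb \<omega> * Y \<zeta> $ 1 $ j"
    unfolding mult2 Lmat_def aa_def bb_def using e
    by (simp add: field_simps)
  show "((\<lambda>t. Y t $ 1 $ j) has_field_derivative aa l \<mu> \<zeta> * Y \<zeta> $ 1 $ j + bb \<omega> * Y \<zeta> $ 2 $ j) (at \<zeta>) \<and>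
        ((\<lambda>t. Y t $ 2 $ j) has_field_derivative bb \<omega> * Y \<zeta> $ 1 $ j) (at \<zeta>)"
    using assms unfolding fundamental_solution_L_def 1[symmetric] 2[symmetric] by blast
qed


lemma tr2:
  fixes m11 m12 m21 m22 k11 k12 k21 k22 n11 n12 n21 n22 :: complex
  assumes "k11 = (m11*k11 + m12*k21)*n11 + (m11*k12+m12*k22)*n21"
    "k12 = (m11*k11 + m12*k21)*n12 + (m11*k12+m12*k22)*n22"
    "k21 = (m21*k11 + m22*k21)*n11 + (m21*k12+m22*k22)*n21"
    "k22 = (m21*k11 + m22*k21)*n12 + (m21*k12+m22*k22)*n22"
  shows "(k11*k22-k12*k21) * ((m11*m22-m12*m21)*(n11+n22) - (m11+m22)) = 0"
  using assms by algebra

lemma final_alg: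
  fixes a b c M K :: "complex^2^2" and d0 :: complex
  assumes h3: "\<And>j. d0 * cnj (a$1$j) = a$1$1*K$1$j + a$1$2*K$2$j"
     "\<And>j. d0 * (- cnj (a$2$j)) = a$2$1*K$1$j + a$2$2*K$2$j"
    and h4: "\<And>j. d0 * cnj (b$1$j) = c$1$1*K$1$j + c$1$2*K$2$j"
     "\<And>j. d0 * (- cnj (b$2$j)) = c$2$1*K$1$j + c$2$2*K$2$j"
    and hc: "\<And>i j. c$i$j = a$i$1*M$1$j + a$i$2*M$2$j"
    and ha: "\<And>i j. a$i$j = b$i$1*M$1$j + b$i$2*M$2$j"
    and da: "a$1$1*a$2$2 - a$1$2*a$2$1 \<noteq> 0" and d0: "d0 \<noteq> 0"
  shows "(M$1$1*M$2$2 - M$1$2*M$2$1) * (cnj(M$1$1) + cnj(M$2$2)) = M$1$1 + M$2$2"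
proof -
  define N where "N i j = cnj (M$i$j)" for i j
  define X where "X r j = (M$r$1*K$1$1 + M$r$2*K$2$1)*N 1 j + (M$r$1*K$1$2 + M$r$2*K$2$2)*N 2 j" for r j
  have ca: "cnj (a$i$j) = cnj (b$i$1)*N 1 j + cnj (b$i$2)*N 2 j" for i j
    using arg_cong[OF ha[of i j], of cnj] by (simp add: N_def)
  have r1: "a$1$1 * (K$1$j - X 1 j) + a$1$2 * (K$2$j - X 2 j) = 0" for j
  proof -
    have "a$1$1*K$1$j + a$1$2*K$2$j = d0 * cnj (b$1$1)*N 1 j + d0 * cnj (b$1$2)*N 2 j"
      using h3(1)[of j] ca[of 1 j] by (simp add: algebra_simps)
    also have "\<dots> = (c$1$1*K$1$1 + c$1$2*K$2$1)*N 1 j + (c$1$1*K$1$2 + c$1$2*K$2$2)*N 2 j"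
      using h4(1)[of 1] h4(1)[of 2] by simp
    also have "\<dots> = a$1$1 * X 1 j + a$1$2 * X 2 j"
      unfolding X_def hc[of 1 1] hc[of 1 2] by (simp add: algebra_simps)
    finally show ?thesis by (simp add: algebra_simps)
  qed
  have r2: "a$2$1 * (K$1$j - X 1 j) + a$2$2 * (K$2$j - X 2 j) = 0" for j
  proof -
    have "a$2$1*K$1$j + a$2$2*K$2$j = d0 * (- cnj (b$2$1))*N 1 j + d0 * (- cnj (b$2$2))*N 2 j"
      using h3(2)[of j] ca[of 2 j] by (simp add: algebra_simps)
    also have "\<dots> = (c$2$1*K$1$1 + c$2$2*K$2$1)*N 1 j + (c$2$1*K$1$2 + c$2$2*K$2$2)*N 2 j"
      using h4(2)[of 1] h4(2)[of 2] by simp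
    also have "\<dots> = a$2$1 * X 1 j + a$2$2 * X 2 j"
      unfolding X_def hc[of 2 1] hc[of 2 2] by (simp add: algebra_simps)
    finally show ?thesis by (simp add: algebra_simps)
  qed
  have KX: "K$1$j = X 1 j \<and> K$2$j = X 2 j" for j
  proof -
    have "(a$1$1*a$2$2 - a$1$2*a$2$1) * (K$1$j - X 1 j) = 0"
      using r1[of j] r2[of j] by algebra
    moreover have "(a$1$1*a$2$2 - a$1$2*a$2$1) * (K$2$j - X 2 j) = 0"
      using r1[of j] r2[of j] by algebra
    ultimately show ?thesis using da by simp
  qed
  have dK: "K$1$1*K$2$2 - K$1$2*K$2$1 \<noteq> 0"
  proof
    assume z: "K$1$1*K$2$2 - K$1$2*K$2$1 = 0"
    have "(a$1$1*a$2$2 - a$1$2*a$2$1) * (K$1$1*K$2$2 - K$1$2*K$2$1)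
       = - (d0*d0) * (cnj (a$1$1) * cnj (a$2$2) - cnj (a$1$2) * cnj (a$2$1))"
      using h3(1)[of 1] h3(1)[of 2] h3(2)[of 1] h3(2)[of 2] by algebra
    with z d0 have "cnj (a$1$1*a$2$2 - a$1$2*a$2$1) = 0" by simp
    then have "a$1$1*a$2$2 - a$1$2*a$2$1 = 0" by (simp only: complex_cnj_zero_iff)
    with da show False by simp
  qed
  have e: "K$1$1 = X 1 1" "K$1$2 = X 1 2" "K$2$1 = X 2 1" "K$2$2 = X 2 2"
    using KX[of 1] KX[of 2] by auto
  have "(K$1$1*K$2$2 - K$1$2*K$2$1) * ((M$1$1*M$2$2 - M$1$2*M$2$1)*(N 1 1 + N 2 2) - (M$1$1 + M$2$2)) = 0"
    by (rule tr2[OF e[unfolded X_def]])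
  with dK have "(M$1$1*M$2$2 - M$1$2*M$2$1)*(N 1 1 + N 2 2) - (M$1$1 + M$2$2) = 0"
    by (simp only: mult_eq_0_iff) simp
  then show ?thesis by (simp add: N_def)
qed

lemma recon:
  fixes y11 y12 y21 y22 z1 z2 d0 k1 k2 E :: complex
  assumes "y11*y22 - y21*y12 = d0*E" "z1*y22 - z2*y12 = k1*E" "y11*z2 - y21*z1 = k2*E" "E \<noteq> 0"
  shows "d0*z1 = y11*k1 + y12*k2 \<and> d0*z2 = y21*k1 + y22*k2"
proof -
  have "E*(d0*z1 - (y11*k1 + y12*k2)) = 0" using assms(1-3) by algebra
  moreover have "E*(d0*z2 - (y21*k1 + y22*k2)) = 0" using assms(1-3) by algebra
  ultimately show ?thesis using assms(4) by simp
qed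

theorem mainTheorem9:
  fixes \<omega> A B :: real and Y :: "complex \<Rightarrow> complex^2^2" and M :: "complex^2^2"
  assumes "\<omega> > 0" and "A \<noteq> 0" and "B / \<omega> \<ge> 0" and "A / (2 * \<omega>) > 0"
    and "is_monodromy_L \<omega> (B / \<omega>) (A / (2 * \<omega>)) Y M"
  shows "trace (normalized_monodromy (B / \<omega>) M) \<in> \<real>"
proof -
  define l where "l = B / \<omega>"
  define \<mu> where "\<mu> = A / (2 * \<omega>)"
  define p :: complex where "p = 2 * of_real pi * \<i>"
  have fund: "fundamental_solution_L \<omega> l \<mu> Y" and mono: "\<And>\<zeta>. Y (\<zeta> + p) = Y \<zeta> ** M"
    using assms(5) unfolding is_monodromy_L_def l_def \<mu>_def p_def by auto
  define y where "y = (\<lambda>i j \<zeta>. Y \<zeta> $ i $ j)"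
  define z1 where "z1 = (\<lambda>j \<zeta>. cnj (y 1 j (cnj \<zeta>)))"
  define z2 where "z2 = (\<lambda>j \<zeta>. - cnj (y 2 j (cnj \<zeta>)))"
  have S1: "sol l \<mu> \<omega> (y 1 1) (y 2 1)" and S2: "sol l \<mu> \<omega> (y 1 2) (y 2 2)"
    using fund_sol[OF fund, of 1] fund_sol[OF fund, of 2] unfolding y_def by auto
  have Z1: "sol l \<mu> \<omega> (z1 1) (z2 1)" using conj_sol[OF S1] unfolding z1_def z2_def by simp
  have Z2: "sol l \<mu> \<omega> (z1 2) (z2 2)" using conj_sol[OF S2] unfolding z1_def z2_def by simp
  define E where "E = (\<lambda>\<zeta>. exp (GG l \<mu> \<zeta>))"
  obtain d0 where dd: "\<And>\<zeta>. y 1 1 \<zeta> * y 2 2 \<zeta> - y 2 1 \<zeta> * y 1 2 \<zeta> = d0 * E \<zeta>"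
    using wr[OF S1 S2] unfolding E_def by blast
  obtain k11 where q11: "\<And>\<zeta>. z1 1 \<zeta> * y 2 2 \<zeta> - z2 1 \<zeta> * y 1 2 \<zeta> = k11 * E \<zeta>"
    using wr[OF Z1 S2] unfolding E_def by blast
  obtain k12 where q12: "\<And>\<zeta>. z1 2 \<zeta> * y 2 2 \<zeta> - z2 2 \<zeta> * y 1 2 \<zeta> = k12 * E \<zeta>"
    using wr[OF Z2 S2] unfolding E_def by blast
  obtain k21 where q21: "\<And>\<zeta>. y 1 1 \<zeta> * z2 1 \<zeta> - y 2 1 \<zeta> * z1 1 \<zeta> = k21 * E \<zeta>"
    using wr[OF S1 Z1] unfolding E_def by blast
  obtain k22 where q22: "\<And>\<zeta>. y 1 1 \<zeta> * z2 2 \<zeta> - y 2 1 \<zeta> * z1 2 \<zeta> = k22 * E \<zeta>"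
    using wr[OF S1 Z2] unfolding E_def by blast
  define K :: "complex^2^2" where "K = vector [vector [k11, k12], vector [k21, k22]]"
  have EN: "E \<zeta> \<noteq> 0" for \<zeta> by (simp add: E_def)
  have rc1: "d0 * z1 j \<zeta> = y 1 1 \<zeta> * K$1$j + y 1 2 \<zeta> * K$2$j \<and>
             d0 * z2 j \<zeta> = y 2 1 \<zeta> * K$1$j + y 2 2 \<zeta> * K$2$j" for j :: 2 and \<zeta>
  proof -
    consider "j = 1" | "j = 2" using exhaust_2 by blast
    then show ?thesis
    proof cases
      case 1
      then show ?thesis using recon[OF dd q11 q21 EN] by (simp add: K_def)
    next
      case 2
      then show ?thesis using recon[OF dd q12 q22 EN] by (simp add: K_def)
    qed
  qed
  have cp: "cnj p = - p" by (simp add: p_def)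
  have GG0: "GG l \<mu> 0 = 0" by (simp add: GG_def)
  have ep: "exp p = 1" by (simp add: p_def)
  have GGp: "GG l \<mu> p = - (of_real l * p)"
    using ep by (simp add: GG_def exp_minus)
  have d00: "det (Y 0) = d0" using dd[of 0] GG0 unfolding E_def y_def det_2
    by (simp add: algebra_simps)
  have fund2: "det (Y 0) \<noteq> 0" using fund unfolding fundamental_solution_L_def by blast
  have d0n: "d0 \<noteq> 0" using d00 fund2 by simp
  have Yp: "Y p = Y 0 ** M" using mono[of 0] by simp
  have Ym: "Y 0 = Y (-p) ** M" using mono[of "-p"] by simp
  have detM: "det M = exp (- (of_real l * p))"
  proof -
    have "det (Y p) = d0 * exp (- (of_real l * p))" using dd[of p] GGp unfolding E_def y_def det_2
      by (simp add: algebra_simps)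
    moreover have "det (Y p) = d0 * det M" using Yp d00 by (simp add: det_mul)
    ultimately show ?thesis using d0n by simp
  qed
  have fin: "(M$1$1*M$2$2 - M$1$2*M$2$1) * (cnj(M$1$1) + cnj(M$2$2)) = M$1$1 + M$2$2"
  proof (rule final_alg[of d0 "Y 0" K "Y (-p)" "Y p" M])
    show "d0 * cnj (Y 0 $ 1 $ j) = Y 0 $ 1 $ 1 * K $ 1 $ j + Y 0 $ 1 $ 2 * K $ 2 $ j" for j
      using rc1[of j 0] unfolding z1_def y_def by simp
    show "d0 * - cnj (Y 0 $ 2 $ j) = Y 0 $ 2 $ 1 * K $ 1 $ j + Y 0 $ 2 $ 2 * K $ 2 $ j" for j
      using rc1[of j 0] unfolding z2_def y_def by simp
    show "d0 * cnj (Y (-p) $ 1 $ j) = Y p $ 1 $ 1 * K $ 1 $ j + Y p $ 1 $ 2 * K $ 2 $ j" for j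
      using rc1[of j p] cp unfolding z1_def y_def by simp
    show "d0 * - cnj (Y (-p) $ 2 $ j) = Y p $ 2 $ 1 * K $ 1 $ j + Y p $ 2 $ 2 * K $ 2 $ j" for j
      using rc1[of j p] cp unfolding z2_def y_def by simp
    show "Y p $ i $ j = Y 0 $ i $ 1 * M $ 1 $ j + Y 0 $ i $ 2 * M $ 2 $ j" for i j
      using Yp by (simp add: mult2)
    show "Y 0 $ i $ j = Y (-p) $ i $ 1 * M $ 1 $ j + Y (-p) $ i $ 2 * M $ 2 $ j" for i j
      using Ym by (metis mult2)
    show "Y 0 $ 1 $ 1 * Y 0 $ 2 $ 2 - Y 0 $ 1 $ 2 * Y 0 $ 2 $ 1 \<noteq> 0" using fund2 by (simp add: det_2)
    show "d0 \<noteq> 0" by (rule d0n)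
  qed
  define w where "w = of_real pi * \<i> * of_real l"
  define t where "t = M$1$1 + M$2$2"
  have lp: "of_real l * p = 2 * w" by (simp add: p_def w_def algebra_simps)
  have tr: "trace (normalized_monodromy l M) = exp w * t"
    unfolding normalized_monodromy_def trace_def sum_2 mult2 t_def w_def
    by (simp add: mat_def algebra_simps)
  have ct: "cnj t = exp (2 * w) * t"
  proof -
    have "exp (- (2 * w)) * cnj t = t" using fin detM lp unfolding det_2 t_def by simp
    then show ?thesis by (simp add: exp_minus field_simps)
  qed
  have cw: "cnj w = - w" by (simp add: w_def)
  have "cnj (exp w * t) = exp (-w) * exp (2 * w) * t" by (simp add: exp_cnj cw ct)
  also have "\<dots> = exp (-w + 2 * w) * t" by (simp only: exp_add)
  also have "\<dots> = exp w * t" by simp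
  finally have "cnj (exp w * t) = exp w * t" .
  then show ?thesis unfolding l_def[symmetric] tr by (simp add: Reals_cnj_iff)
qed

end
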